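(* Let $\mathcal{D}(\rho)=(1-p)\rho+\frac p3(X\rho X+Y\rho Y+Z\rho Z)$ and $\mathcal{E}(\rho)=(1-q)\rho+\frac q3(X\rho X+Y\rho Y+Z\rho Z)$ be depolarizing channels with $p,q\in[0,1]$. The entanglement-assisted classical communication capacity over a quantum trajectory is $$C_{\text{E,Q}}=2+H(\alpha)+\Big(1-p-q+\tfrac{4pq}{3}\Big)\log_2\Big(1-p-q+\tfrac{4pq}{3}\Big)+(p+q-2pq)\log_2\Big(\tfrac{p+q-2pq}{3}\Big)+\tfrac{2pq}{3}\log_2\tfrac{2pq}{9},$$ where $\alpha=1-\frac{2pq}{3}$ and $H(\alpha)=-\alpha\log_2\alpha-(1-\alpha)\log_2(1-\alpha)$.
   Context: $X,Y,Z$ are Pauli matrices, $\sigma_0=I,\sigma_1=X,\sigma_2=Y,\sigma_3=Z$, $|\pm\rangle=(|0\rangle\pm|1\rangle)/\sqrt2$, $0\log_2 0=0$. For a Pauli channel $\mathcal{N}(\rho)=\sum_i r_i\sigma_i\rho\sigma_i$, the entanglement-assisted classical capacity (superdense coding, pre-shared EPR pair, equiprobable inputs) is $C_E(\mathcal{N})=2+\sum_i r_i\log_2 r_i$. Quantum trajectory: given Kraus operators $\{D_i\}$ of $\mathcal{D}$ and $\{E_j\}$ of $\mathcal{E}$ (multiples of Pauli matrices), the switched channel on data $\rho$ and control $\omega=|+\rangle\langle+|$ is $\sum_{i,j}W_{i,j}(\rho\otimes\omega)W_{i,j}^\dagger$ with $W_{i,j}=E_jD_i\otimes|0\rangle\langle0|+D_iE_j\otimes|1\rangle\langle1|$.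 Its output has the form $p_+\mathcal{S}_+(\rho)\otimes|+\rangle\langle+|+p_-\mathcal{S}_-(\rho)\otimes|-\rangle\langle-|$ (commuting Kraus pairs go to the $|+\rangle$ branch, anticommuting pairs to the $|-\rangle$ branch), with $\mathcal{S}_\pm$ normalized Pauli channels; the capacity is defined as $C_{\text{E,Q}}=p_+C_E(\mathcal{S}_+)+p_-C_E(\mathcal{S}_-)$. *)

theory Defs
  imports "HOL-Analysis.Analysis"
begin

text \<open>Pauli matrices sigma_0 = I, sigma_1 = X, sigma_2 = Y, sigma_3 = Z as complex 2x2 matrices
  (row/column index 1 of type 2 is basis state |0>, index 2 is |1>).\<close>

definition pauli :: "nat \<Rightarrow> complex^2^2" where
  "pauli k = (if k = 0 then mat 1
     else if k = 1 then (\<chi> r c. if r \<noteq> c then 1 else 0)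
     else if k = 2 then (\<chi> r c. if r = 1 \<and> c = 2 then - \<i> else if r = 2 \<and> c = 1 then \<i> else 0)
     else (\<chi> r c. if r = c then (if r = 1 then 1 else -1) else 0))"

text \<open>Pauli channel N(rho) = sum_i r_i sigma_i rho sigma_i, represented by its coefficient vector
  r :: nat => real (indices 0..3).\<close>

definition depolarizing :: "real \<Rightarrow> nat \<Rightarrow> real" where
  "depolarizing p i = (if i = 0 then 1 - p else p / 3)"

definition xlog2 :: "real \<Rightarrow> real" where
  "xlog2 x = (if x = 0 then 0 else x * log 2 x)"

definition C_E :: "(nat \<Rightarrow> real) \<Rightarrow> real" where
  "C_E r = 2 + (\<Sum>i<4. xlog2 (r i))"

definition kraus_commute :: "nat \<Rightarrow> nat \<Rightarrow> bool" where
  "kraus_commute i j \<longleftrightarrow> pauli i ** pauli j = pauli j ** pauli i"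

text \<open>The Kraus operator E_j D_i (equivalently D_i E_j up to sign) is proportional to sigma_k.\<close>
definition prod_prop :: "nat \<Rightarrow> nat \<Rightarrow> nat \<Rightarrow> bool" where
  "prod_prop i j k \<longleftrightarrow> (\<exists>c::complex. pauli j ** pauli i = (\<chi> r s. c * pauli k $ r $ s))"

text \<open>Branch weights p_+ (commuting pairs) and p_- (anticommuting pairs) of the switched
  channel, for Pauli channels D, E with coefficients d, e.\<close>
definition p_plus :: "(nat \<Rightarrow> real) \<Rightarrow> (nat \<Rightarrow> real) \<Rightarrow> real" where
  "p_plus d e = (\<Sum>i<4. \<Sum>j<4. if kraus_commute i j then d i * e j else 0)"

definition p_minus :: "(nat \<Rightarrow> real) \<Rightarrow> (nat \<Rightarrow> real) \<Rightarrow> real" where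
  "p_minus d e = (\<Sum>i<4. \<Sum>j<4. if kraus_commute i j then 0 else d i * e j)"

definition S_plus :: "(nat \<Rightarrow> real) \<Rightarrow> (nat \<Rightarrow> real) \<Rightarrow> nat \<Rightarrow> real" where
  "S_plus d e k = (\<Sum>i<4. \<Sum>j<4. if kraus_commute i j \<and> prod_prop i j k then d i * e j else 0)
                   / p_plus d e"

definition S_minus :: "(nat \<Rightarrow> real) \<Rightarrow> (nat \<Rightarrow> real) \<Rightarrow> nat \<Rightarrow> real" where
  "S_minus d e k = (\<Sum>i<4. \<Sum>j<4. if \<not> kraus_commute i j \<and> prod_prop i j k then d i * e j else 0)
                   / p_minus d e"

definition C_EQ :: "(nat \<Rightarrow> real) \<Rightarrow> (nat \<Rightarrow> real) \<Rightarrow> real" where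
  "C_EQ d e = p_plus d e * C_E (S_plus d e) + p_minus d e * C_E (S_minus d e)"

definition H2 :: "real \<Rightarrow> real" where
  "H2 a = - xlog2 a - xlog2 (1 - a)"

end

theory Submission imports Defs begin
definition mk :: "complex \<Rightarrow> complex \<Rightarrow> complex \<Rightarrow> complex \<Rightarrow> complex^2^2" where
 "mk a b c d = (\<chi> r s. if r = 1 then (if s = 1 then a else b) else (if s = 1 then c else d))"
lemma UNIV2: "(UNIV::2 set) = {1,2}" using exhaust_2 by auto
lemma mk_eq: "mk a b c d = mk a' b' c' d' \<longleftrightarrow> a=a' \<and> b=b' \<and> c=c' \<and> d=d'"
  unfolding mk_def vec_eq_iff by (auto simp: forall_2)
lemma mk_mult: "mk a b c d ** mk a' b' c' d' = mk (a*a'+b*c') (a*b'+b*d') (c*a'+d*c') (c*b'+d*d')"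
  unfolding mk_def matrix_matrix_mult_def by (auto simp: vec_eq_iff forall_2 UNIV2)
lemma mk_scale: "(\<chi> r s. x * mk a b c d $ r $ s) = mk (x*a) (x*b) (x*c) (x*d)"
  unfolding mk_def by (auto simp: vec_eq_iff forall_2)
lemma mk_scale2: "(\<chi> r s. - (x * mk a b c d $ r $ s)) = mk (-x*a) (-x*b) (-x*c) (-x*d)"
  unfolding mk_def by (auto simp: vec_eq_iff forall_2)
lemma pauli0: "pauli 0 = mk 1 0 0 1" unfolding pauli_def mk_def mat_def by (auto simp: vec_eq_iff forall_2)
lemma pauli1: "pauli 1 = mk 0 1 1 0" unfolding pauli_def mk_def by (auto simp: vec_eq_iff forall_2)
lemma pauli2: "pauli 2 = mk 0 (-\<i>) \<i> 0" unfolding pauli_def mk_def by (auto simp: vec_eq_iff forall_2)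
lemma pauli3: "pauli 3 = mk 1 0 0 (-1)" unfolding pauli_def mk_def by (auto simp: vec_eq_iff forall_2)
lemma pauli1s: "pauli (Suc 0) = mk 0 1 1 0" using pauli1 by simp
lemmas P = pauli0 pauli1 pauli1s pauli2 pauli3
lemma four: "(i::nat) < 4 \<Longrightarrow> i = 0 \<or> i = 1 \<or> i = 2 \<or> i = 3" by auto
lemma kc: "i < 4 \<Longrightarrow> j < 4 \<Longrightarrow> kraus_commute i j \<longleftrightarrow> (i = 0 \<or> j = 0 \<or> i = j)"
  unfolding kraus_commute_def
  by (drule four, drule four, auto simp: P mk_mult mk_eq)
lemma pp_0_0_0: "prod_prop 0 0 0"
  unfolding prod_prop_def by (rule exI[of _ "1"]) (simp add: P mk_mult mk_eq mk_scale mk_scale2)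
lemma pp_0_0_1: "\<not> prod_prop 0 0 1"
  unfolding prod_prop_def by (auto simp: P mk_mult mk_eq mk_scale mk_scale2)
lemma pp_0_0_2: "\<not> prod_prop 0 0 2"
  unfolding prod_prop_def by (auto simp: P mk_mult mk_eq mk_scale mk_scale2)
lemma pp_0_0_3: "\<not> prod_prop 0 0 3"
  unfolding prod_prop_def by (auto simp: P mk_mult mk_eq mk_scale mk_scale2)
lemma pp_0_1_0: "\<not> prod_prop 0 1 0"
  unfolding prod_prop_def by (auto simp: P mk_mult mk_eq mk_scale mk_scale2)
lemma pp_0_1_1: "prod_prop 0 1 1"
  unfolding prod_prop_def by (rule exI[of _ "1"]) (simp add: P mk_mult mk_eq mk_scale mk_scale2)
lemma pp_0_1_2: "\<not> prod_prop 0 1 2"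
  unfolding prod_prop_def by (auto simp: P mk_mult mk_eq mk_scale mk_scale2)
lemma pp_0_1_3: "\<not> prod_prop 0 1 3"
  unfolding prod_prop_def by (auto simp: P mk_mult mk_eq mk_scale mk_scale2)
lemma pp_0_2_0: "\<not> prod_prop 0 2 0"
  unfolding prod_prop_def by (auto simp: P mk_mult mk_eq mk_scale mk_scale2)
lemma pp_0_2_1: "\<not> prod_prop 0 2 1"
  unfolding prod_prop_def by (auto simp: P mk_mult mk_eq mk_scale mk_scale2)
lemma pp_0_2_2: "prod_prop 0 2 2"
  unfolding prod_prop_def by (rule exI[of _ "1"]) (simp add: P mk_mult mk_eq mk_scale mk_scale2)
lemma pp_0_2_3: "\<not> prod_prop 0 2 3"
  unfolding prod_prop_def by (auto simp: P mk_mult mk_eq mk_scale mk_scale2)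
lemma pp_0_3_0: "\<not> prod_prop 0 3 0"
  unfolding prod_prop_def by (auto simp: P mk_mult mk_eq mk_scale mk_scale2)
lemma pp_0_3_1: "\<not> prod_prop 0 3 1"
  unfolding prod_prop_def by (auto simp: P mk_mult mk_eq mk_scale mk_scale2)
lemma pp_0_3_2: "\<not> prod_prop 0 3 2"
  unfolding prod_prop_def by (auto simp: P mk_mult mk_eq mk_scale mk_scale2)
lemma pp_0_3_3: "prod_prop 0 3 3"
  unfolding prod_prop_def by (rule exI[of _ "1"]) (simp add: P mk_mult mk_eq mk_scale mk_scale2)
lemma pp_1_0_0: "\<not> prod_prop 1 0 0"
  unfolding prod_prop_def by (auto simp: P mk_mult mk_eq mk_scale mk_scale2)
lemma pp_1_0_1: "prod_prop 1 0 1"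
  unfolding prod_prop_def by (rule exI[of _ "1"]) (simp add: P mk_mult mk_eq mk_scale mk_scale2)
lemma pp_1_0_2: "\<not> prod_prop 1 0 2"
  unfolding prod_prop_def by (auto simp: P mk_mult mk_eq mk_scale mk_scale2)
lemma pp_1_0_3: "\<not> prod_prop 1 0 3"
  unfolding prod_prop_def by (auto simp: P mk_mult mk_eq mk_scale mk_scale2)
lemma pp_1_1_0: "prod_prop 1 1 0"
  unfolding prod_prop_def by (rule exI[of _ "1"]) (simp add: P mk_mult mk_eq mk_scale mk_scale2)
lemma pp_1_1_1: "\<not> prod_prop 1 1 1"
  unfolding prod_prop_def by (auto simp: P mk_mult mk_eq mk_scale mk_scale2)
lemma pp_1_1_2: "\<not> prod_prop 1 1 2"
  unfolding prod_prop_def by (auto simp: P mk_mult mk_eq mk_scale mk_scale2)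
lemma pp_1_1_3: "\<not> prod_prop 1 1 3"
  unfolding prod_prop_def by (auto simp: P mk_mult mk_eq mk_scale mk_scale2)
lemma pp_1_2_0: "\<not> prod_prop 1 2 0"
  unfolding prod_prop_def by (auto simp: P mk_mult mk_eq mk_scale mk_scale2)
lemma pp_1_2_1: "\<not> prod_prop 1 2 1"
  unfolding prod_prop_def by (auto simp: P mk_mult mk_eq mk_scale mk_scale2)
lemma pp_1_2_2: "\<not> prod_prop 1 2 2"
  unfolding prod_prop_def by (auto simp: P mk_mult mk_eq mk_scale mk_scale2)
lemma pp_1_2_3: "prod_prop 1 2 3"
  unfolding prod_prop_def by (rule exI[of _ "-\<i>"]) (simp add: P mk_mult mk_eq mk_scale mk_scale2)
lemma pp_1_3_0: "\<not> prod_prop 1 3 0"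
  unfolding prod_prop_def by (auto simp: P mk_mult mk_eq mk_scale mk_scale2)
lemma pp_1_3_1: "\<not> prod_prop 1 3 1"
  unfolding prod_prop_def by (auto simp: P mk_mult mk_eq mk_scale mk_scale2)
lemma pp_1_3_2: "prod_prop 1 3 2"
  unfolding prod_prop_def by (rule exI[of _ "\<i>"]) (simp add: P mk_mult mk_eq mk_scale mk_scale2)
lemma pp_1_3_3: "\<not> prod_prop 1 3 3"
  unfolding prod_prop_def by (auto simp: P mk_mult mk_eq mk_scale mk_scale2)
lemma pp_2_0_0: "\<not> prod_prop 2 0 0"
  unfolding prod_prop_def by (auto simp: P mk_mult mk_eq mk_scale mk_scale2)
lemma pp_2_0_1: "\<not> prod_prop 2 0 1"
  unfolding prod_prop_def by (auto simp: P mk_mult mk_eq mk_scale mk_scale2)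
lemma pp_2_0_2: "prod_prop 2 0 2"
  unfolding prod_prop_def by (rule exI[of _ "1"]) (simp add: P mk_mult mk_eq mk_scale mk_scale2)
lemma pp_2_0_3: "\<not> prod_prop 2 0 3"
  unfolding prod_prop_def by (auto simp: P mk_mult mk_eq mk_scale mk_scale2)
lemma pp_2_1_0: "\<not> prod_prop 2 1 0"
  unfolding prod_prop_def by (auto simp: P mk_mult mk_eq mk_scale mk_scale2)
lemma pp_2_1_1: "\<not> prod_prop 2 1 1"
  unfolding prod_prop_def by (auto simp: P mk_mult mk_eq mk_scale mk_scale2)
lemma pp_2_1_2: "\<not> prod_prop 2 1 2"
  unfolding prod_prop_def by (auto simp: P mk_mult mk_eq mk_scale mk_scale2)
lemma pp_2_1_3: "prod_prop 2 1 3"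
  unfolding prod_prop_def by (rule exI[of _ "\<i>"]) (simp add: P mk_mult mk_eq mk_scale mk_scale2)
lemma pp_2_2_0: "prod_prop 2 2 0"
  unfolding prod_prop_def by (rule exI[of _ "1"]) (simp add: P mk_mult mk_eq mk_scale mk_scale2)
lemma pp_2_2_1: "\<not> prod_prop 2 2 1"
  unfolding prod_prop_def by (auto simp: P mk_mult mk_eq mk_scale mk_scale2)
lemma pp_2_2_2: "\<not> prod_prop 2 2 2"
  unfolding prod_prop_def by (auto simp: P mk_mult mk_eq mk_scale mk_scale2)
lemma pp_2_2_3: "\<not> prod_prop 2 2 3"
  unfolding prod_prop_def by (auto simp: P mk_mult mk_eq mk_scale mk_scale2)
lemma pp_2_3_0: "\<not> prod_prop 2 3 0"
  unfolding prod_prop_def by (auto simp: P mk_mult mk_eq mk_scale mk_scale2)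
lemma pp_2_3_1: "prod_prop 2 3 1"
  unfolding prod_prop_def by (rule exI[of _ "-\<i>"]) (simp add: P mk_mult mk_eq mk_scale mk_scale2)
lemma pp_2_3_2: "\<not> prod_prop 2 3 2"
  unfolding prod_prop_def by (auto simp: P mk_mult mk_eq mk_scale mk_scale2)
lemma pp_2_3_3: "\<not> prod_prop 2 3 3"
  unfolding prod_prop_def by (auto simp: P mk_mult mk_eq mk_scale mk_scale2)
lemma pp_3_0_0: "\<not> prod_prop 3 0 0"
  unfolding prod_prop_def by (auto simp: P mk_mult mk_eq mk_scale mk_scale2)
lemma pp_3_0_1: "\<not> prod_prop 3 0 1"
  unfolding prod_prop_def by (auto simp: P mk_mult mk_eq mk_scale mk_scale2)
lemma pp_3_0_2: "\<not> prod_prop 3 0 2"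
  unfolding prod_prop_def by (auto simp: P mk_mult mk_eq mk_scale mk_scale2)
lemma pp_3_0_3: "prod_prop 3 0 3"
  unfolding prod_prop_def by (rule exI[of _ "1"]) (simp add: P mk_mult mk_eq mk_scale mk_scale2)
lemma pp_3_1_0: "\<not> prod_prop 3 1 0"
  unfolding prod_prop_def by (auto simp: P mk_mult mk_eq mk_scale mk_scale2)
lemma pp_3_1_1: "\<not> prod_prop 3 1 1"
  unfolding prod_prop_def by (auto simp: P mk_mult mk_eq mk_scale mk_scale2)
lemma pp_3_1_2: "prod_prop 3 1 2"
  unfolding prod_prop_def by (rule exI[of _ "-\<i>"]) (simp add: P mk_mult mk_eq mk_scale mk_scale2)
lemma pp_3_1_3: "\<not> prod_prop 3 1 3"
  unfolding prod_prop_def by (auto simp: P mk_mult mk_eq mk_scale mk_scale2)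
lemma pp_3_2_0: "\<not> prod_prop 3 2 0"
  unfolding prod_prop_def by (auto simp: P mk_mult mk_eq mk_scale mk_scale2)
lemma pp_3_2_1: "prod_prop 3 2 1"
  unfolding prod_prop_def by (rule exI[of _ "\<i>"]) (simp add: P mk_mult mk_eq mk_scale mk_scale2)
lemma pp_3_2_2: "\<not> prod_prop 3 2 2"
  unfolding prod_prop_def by (auto simp: P mk_mult mk_eq mk_scale mk_scale2)
lemma pp_3_2_3: "\<not> prod_prop 3 2 3"
  unfolding prod_prop_def by (auto simp: P mk_mult mk_eq mk_scale mk_scale2)
lemma pp_3_3_0: "prod_prop 3 3 0"
  unfolding prod_prop_def by (rule exI[of _ "1"]) (simp add: P mk_mult mk_eq mk_scale mk_scale2)
lemma pp_3_3_1: "\<not> prod_prop 3 3 1"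
  unfolding prod_prop_def by (auto simp: P mk_mult mk_eq mk_scale mk_scale2)
lemma pp_3_3_2: "\<not> prod_prop 3 3 2"
  unfolding prod_prop_def by (auto simp: P mk_mult mk_eq mk_scale mk_scale2)
lemma pp_3_3_3: "\<not> prod_prop 3 3 3"
  unfolding prod_prop_def by (auto simp: P mk_mult mk_eq mk_scale mk_scale2)
lemmas PP = pp_0_0_0 pp_0_0_1 pp_0_0_2 pp_0_0_3 pp_0_1_0 pp_0_1_1 pp_0_1_2 pp_0_1_3 pp_0_2_0 pp_0_2_1 pp_0_2_2 pp_0_2_3 pp_0_3_0 pp_0_3_1 pp_0_3_2 pp_0_3_3 pp_1_0_0 pp_1_0_1 pp_1_0_2 pp_1_0_3 pp_1_1_0 pp_1_1_1 pp_1_1_2 pp_1_1_3 pp_1_2_0 pp_1_2_1 pp_1_2_2 pp_1_2_3 pp_1_3_0 pp_1_3_1 pp_1_3_2 pp_1_3_3 pp_2_0_0 pp_2_0_1 pp_2_0_2 pp_2_0_3 pp_2_1_0 pp_2_1_1 pp_2_1_2 pp_2_1_3 pp_2_2_0 pp_2_2_1 pp_2_2_2 pp_2_2_3 pp_2_3_0 pp_2_3_1 pp_2_3_2 pp_2_3_3 pp_3_0_0 pp_3_0_1 pp_3_0_2 pp_3_0_3 pp_3_1_0 pp_3_1_1 pp_3_1_2 pp_3_1_3 pp_3_2_0 pp_3_2_1 pp_3_2_2 pp_3_2_3 pp_3_3_0 pp_3_3_1 pp_3_3_2 pp_3_3_3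
lemma kc_0_0: "kraus_commute 0 0" using kc[of 0 0] by simp
lemma kc_0_1: "kraus_commute 0 1" using kc[of 0 1] by simp
lemma kc_0_2: "kraus_commute 0 2" using kc[of 0 2] by simp
lemma kc_0_3: "kraus_commute 0 3" using kc[of 0 3] by simp
lemma kc_1_0: "kraus_commute 1 0" using kc[of 1 0] by simp
lemma kc_1_1: "kraus_commute 1 1" using kc[of 1 1] by simp
lemma kc_1_2: "\<not> kraus_commute 1 2" using kc[of 1 2] by simp
lemma kc_1_3: "\<not> kraus_commute 1 3" using kc[of 1 3] by simp
lemma kc_2_0: "kraus_commute 2 0" using kc[of 2 0] by simp
lemma kc_2_1: "\<not> kraus_commute 2 1" using kc[of 2 1] by simp
lemma kc_2_2: "kraus_commute 2 2" using kc[of 2 2] by simp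
lemma kc_2_3: "\<not> kraus_commute 2 3" using kc[of 2 3] by simp
lemma kc_3_0: "kraus_commute 3 0" using kc[of 3 0] by simp
lemma kc_3_1: "\<not> kraus_commute 3 1" using kc[of 3 1] by simp
lemma kc_3_2: "\<not> kraus_commute 3 2" using kc[of 3 2] by simp
lemma kc_3_3: "kraus_commute 3 3" using kc[of 3 3] by simp
lemmas KC = kc_0_0 kc_0_1 kc_0_2 kc_0_3 kc_1_0 kc_1_1 kc_1_2 kc_1_3 kc_2_0 kc_2_1 kc_2_2 kc_2_3 kc_3_0 kc_3_1 kc_3_2 kc_3_3






lemmas KCs = KC KC[unfolded One_nat_def]
lemmas PPs = PP PP[unfolded One_nat_def]

lemma sum4: "(\<Sum>i<4::nat. f i) = f 0 + f 1 + f 2 + f 3"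
proof -
  have "{..<4::nat} = {0,1,2,3}" by auto
  then show ?thesis by (simp add: add.assoc)
qed

lemma xl_div: assumes "a > 0" "x \<ge> 0" shows "a * xlog2 (x / a) = xlog2 x - x * log 2 a"
proof (cases "x = 0")
  case True then show ?thesis by (simp add: xlog2_def)
next
  case False
  then have "x > 0" using assms by simp
  then show ?thesis using assms unfolding xlog2_def by (simp add: log_divide field_simps)
qed

theorem corollary6:
  fixes p q :: real
  assumes "0 \<le> p" "p \<le> 1" "0 \<le> q" "q \<le> 1"
  shows "C_EQ (depolarizing p) (depolarizing q) =
           2 + H2 (1 - 2 * p * q / 3)
           + xlog2 (1 - p - q + 4 * p * q / 3)
           + (p + q - 2 * p * q) * log 2 ((p + q - 2 * p * q) / 3)
           + (2 * p * q / 3) * log 2 (2 * p * q / 9)"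
proof -
  define d where "d = depolarizing p"
  define e where "e = depolarizing q"
  define al where "al = 1 - 2 * p * q / 3"
  define be where "be = 2 * p * q / 3"
  define A0 where "A0 = 1 - p - q + 4 * p * q / 3"
  define As where "As = (p + q - 2 * p * q) / 3"
  have pq: "p * q \<le> 1" "0 \<le> p * q" using assms by (auto intro: mult_le_one)
  have alpos: "al > 0" using pq unfolding al_def by simp
  have bege: "be \<ge> 0" using pq unfolding be_def by simp
  have A0ge: "A0 \<ge> 0"
  proof -
    have "A0 = (1-p)*(1-q) + p*q/3" unfolding A0_def by (simp add: field_simps)
    then show ?thesis using assms by simp
  qed
  have Asge: "As \<ge> 0"
  proof -
    have "As = (p*(1-q) + q*(1-p))/3" unfolding As_def by (simp add: field_simps)
    moreover have "0 \<le> p*(1-q) + q*(1-p)" using assms by simp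
    ultimately show ?thesis by simp
  qed
  have sumA: "A0 + 3 * As = al" unfolding A0_def As_def al_def by (simp add: field_simps)
  have ppl: "p_plus d e = al"
    unfolding p_plus_def d_def e_def al_def sum4 by (simp add: KCs depolarizing_def field_simps)
  have pmi: "p_minus d e = be"
    unfolding p_minus_def d_def e_def be_def sum4 by (simp add: KCs depolarizing_def)
  have Sp: "S_plus d e 0 = A0 / al" "S_plus d e 1 = As / al" "S_plus d e 2 = As / al" "S_plus d e 3 = As / al"
    unfolding S_plus_def ppl unfolding d_def e_def A0_def As_def sum4 using alpos
    by (simp_all add: KCs PPs depolarizing_def) (simp_all add: field_simps)
  have Sm: "S_minus d e 0 = 0" "S_minus d e 1 = (2*p*q/9) / be" "S_minus d e 2 = (2*p*q/9) / be" "S_minus d e 3 = (2*p*q/9) / be"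
    unfolding S_minus_def pmi unfolding d_def e_def sum4
    by (simp_all add: KCs PPs depolarizing_def)
  have part1: "p_plus d e * C_E (S_plus d e) = 2 * al + xlog2 A0 + 3 * xlog2 As - al * log 2 al"
  proof -
    have "p_plus d e * C_E (S_plus d e) = 2 * al + al * xlog2 (A0/al) + 3 * (al * xlog2 (As/al))"
      unfolding C_E_def sum4 Sp ppl by (simp add: algebra_simps)
    also have "\<dots> = 2 * al + (xlog2 A0 - A0 * log 2 al) + 3 * (xlog2 As - As * log 2 al)"
      using xl_div[OF alpos A0ge] xl_div[OF alpos Asge] by simp
    also have "\<dots> = 2 * al + xlog2 A0 + 3 * xlog2 As - (A0 + 3 * As) * log 2 al"
      by (simp add: algebra_simps)
    finally show ?thesis using sumA by simp
  qed
  have part2: "p_minus d e * C_E (S_minus d e) = 2 * be - be * log 2 3"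
  proof (cases "be = 0")
    case True then show ?thesis using pmi by simp
  next
    case False
    then have bp: "be > 0" using bege by simp
    have t: "(2*p*q/9) / be = 1/3" using False unfolding be_def by (simp add: field_simps)
    have "C_E (S_minus d e) = 2 + 3 * xlog2 (1/3)"
      unfolding C_E_def sum4 Sm t by (simp add: xlog2_def)
    then have "p_minus d e * C_E (S_minus d e) = be * (2 + 3 * xlog2 (1/3))"
      using pmi by simp
    also have "\<dots> = 2 * be - be * log 2 3"
      by (simp add: xlog2_def log_divide algebra_simps)
    finally show ?thesis .
  qed
  have H: "H2 al = - al * log 2 al - xlog2 be"
  proof -
    have om: "1 - al = be" unfolding al_def be_def by simp
    show ?thesis unfolding H2_def om using alpos by (simp add: xlog2_def)
  qed
  have T3: "(p + q - 2 * p * q) * log 2 ((p + q - 2 * p * q) / 3) = 3 * xlog2 As"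
    unfolding As_def xlog2_def by simp
  have T4: "be * log 2 (2 * p * q / 9) - xlog2 be = - be * log 2 3"
  proof (cases "be = 0")
    case True then show ?thesis by (simp add: xlog2_def)
  next
    case False
    then have bp: "be > 0" using bege by simp
    have "2 * p * q / 9 = be / 3" unfolding be_def by simp
    then show ?thesis using bp False by (simp add: xlog2_def log_divide algebra_simps)
  qed
  have "C_EQ d e = 2 * (al + be) + xlog2 A0 + 3 * xlog2 As - al * log 2 al - be * log 2 3"
    unfolding C_EQ_def part1 part2 by simp
  also have "al + be = 1" unfolding al_def be_def by simp
  finally have L: "C_EQ d e = 2 + xlog2 A0 + 3 * xlog2 As - al * log 2 al - be * log 2 3" by simp
  show ?thesis
    unfolding d_def[symmetric] e_def[symmetric] al_def[symmetric] A0_def[symmetric] T3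
    using L H T4 unfolding be_def by (simp add: algebra_simps)
qed

end
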